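(* Let $H$ be a separable complex Hilbert space, let $\{v_j\}_{j\in\mathbb N}$ be an orthonormal basis of $H$, let $\{w_j\}_{j\in\mathbb N}$ be a set of unit vectors in $H$, and fix $N\ge 1$. Let $\mathcal B_N=\{w_j\}_{1\le j\le N}\cup\{v_j\}_{j\ge N+1}$, let $H_N'=\operatorname{span}\{v_1,\dots,v_N\}$, and let $p_N'$ denote the orthogonal projection of $H$ onto $H_N'$. Then the following are equivalent: (a) $\mathcal B_N$ is a frame of $H$; (b) the set $\{p_N'(w_1),\dots,p_N'(w_N)\}$ spans $H_N'$; (c) the set $\{p_N'(w_1),\dots,p_N'(w_N)\}$ is linearly independent; (d) $\mathcal B_N$ is a Riesz sequence in $H$; (e) $\mathcal B_N$ is a Riesz basis of $H$.
   Context: A sequence $\{u_j\}$ in $H$ is a frame if there are constants $0<A\le B<\infty$ with $A\|f\|^2\le\sum_j|\langle f,u_j\rangle|^2\le B\|f\|^2$ for all $f\in H$. It is a Riesz sequence if there are constants $0<A\le B<\infty$ with $A\sum_{j\in J}|a_j|^2\le\|\sum_{j\in J}a_ju_j\|^2\le B\sum_{j\in J}|a_j|^2$ for every finite set of coefficients $\{a_j\}_{j\in J}\subset\mathbb C$. A Riesz basis is a sequence that is both a frame and a Riesz sequence. *)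

theory Defs
  imports "HOL-Analysis.Analysis"
begin

class complex_inner = real_normed_vector +
  fixes scaleC :: "complex \<Rightarrow> 'a \<Rightarrow> 'a" (infixr \<open>*\<^sub>C\<close> 75)
    and cinner :: "'a \<Rightarrow> 'a \<Rightarrow> complex"
  assumes scaleC_add_right: "a *\<^sub>C (x + y) = a *\<^sub>C x + a *\<^sub>C y"
    and scaleC_add_left: "(a + b) *\<^sub>C x = a *\<^sub>C x + b *\<^sub>C x"
    and scaleC_scaleC: "a *\<^sub>C (b *\<^sub>C x) = (a * b) *\<^sub>C x"
    and scaleC_one: "1 *\<^sub>C x = x"
    and scaleR_scaleC: "scaleR r x = complex_of_real r *\<^sub>C x"
    and cinner_commute: "cinner x y = cnj (cinner y x)"
    and cinner_add_left: "cinner (x + y) z = cinner x z + cinner y z"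
    and cinner_scaleC_left: "cinner (a *\<^sub>C x) y = a * cinner x y"
    and cinner_norm: "cinner x x = complex_of_real ((norm x)\<^sup>2)"

class complex_hilbert = complex_inner + complete_space

interpretation cvs: vector_space "scaleC :: complex \<Rightarrow> 'a::complex_inner \<Rightarrow> 'a"
  by unfold_locales (simp_all add: scaleC_add_right scaleC_add_left scaleC_scaleC scaleC_one)

abbreviation cspan :: "'a::complex_inner set \<Rightarrow> 'a set" where
  "cspan \<equiv> module.span scaleC"

abbreviation cindependent :: "'a::complex_inner set \<Rightarrow> bool" where
  "cindependent S \<equiv> \<not> module.dependent scaleC S"

definition orthonormal_basis :: "(nat \<Rightarrow> 'a::complex_inner) \<Rightarrow> bool" where
  "orthonormal_basis v \<longleftrightarrow>
     (\<forall>i j. cinner (v i) (v j) = (if i = j then 1 else 0)) \<and>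
     closure (cspan (range v)) = UNIV"

definition orth_proj :: "'a::complex_inner set \<Rightarrow> 'a \<Rightarrow> 'a" where
  "orth_proj S x = (THE y. y \<in> S \<and> (\<forall>z\<in>S. cinner (x - y) z = 0))"

definition is_frame :: "(nat \<Rightarrow> 'a::complex_inner) \<Rightarrow> bool" where
  "is_frame u \<longleftrightarrow> (\<exists>A B. 0 < A \<and> A \<le> B \<and>
     (\<forall>f. summable (\<lambda>j. (cmod (cinner f (u j)))\<^sup>2) \<and>
          A * (norm f)\<^sup>2 \<le> (\<Sum>j. (cmod (cinner f (u j)))\<^sup>2) \<and>
          (\<Sum>j. (cmod (cinner f (u j)))\<^sup>2) \<le> B * (norm f)\<^sup>2))"

definition is_riesz_sequence :: "(nat \<Rightarrow> 'a::complex_inner) \<Rightarrow> bool" where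
  "is_riesz_sequence u \<longleftrightarrow> (\<exists>A B. 0 < A \<and> A \<le> B \<and>
     (\<forall>J a. finite J \<longrightarrow>
        A * (\<Sum>j\<in>J. (cmod (a j))\<^sup>2) \<le> (norm (\<Sum>j\<in>J. a j *\<^sub>C u j))\<^sup>2 \<and>
        (norm (\<Sum>j\<in>J. a j *\<^sub>C u j))\<^sup>2 \<le> B * (\<Sum>j\<in>J. (cmod (a j))\<^sup>2)))"

definition is_riesz_basis :: "(nat \<Rightarrow> 'a::complex_inner) \<Rightarrow> bool" where
  "is_riesz_basis u \<longleftrightarrow> is_frame u \<and> is_riesz_sequence u"

end

theory Submission
  imports Defs
begin



context complex_inner begin
end

lemma cinner_add_right: "cinner x (y + z) = cinner x y + cinner (x::'a::complex_inner) z"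
  by (metis cinner_commute cinner_add_left complex_cnj_add)
lemma cinner_scaleC_right: "cinner x (c *\<^sub>C y) = cnj c * cinner (x::'a::complex_inner) y"
  by (metis cinner_commute cinner_scaleC_left complex_cnj_mult complex_cnj_cnj)
lemma cinner_zero_left[simp]: "cinner 0 (x::'a::complex_inner) = 0"
  by (metis add_cancel_right_left cinner_add_left)
lemma cinner_zero_right[simp]: "cinner (x::'a::complex_inner) 0 = 0"
  by (metis cinner_commute cinner_zero_left complex_cnj_zero)
lemma cinner_minus_left: "cinner (- x) (y::'a::complex_inner) = - cinner x y"
  by (metis add.right_inverse add_eq_0_iff cinner_add_left cinner_zero_left)
lemma cinner_diff_left: "cinner (x - y) (z::'a::complex_inner) = cinner x z - cinner y z"
  by (metis cinner_add_left cinner_minus_left diff_conv_add_uminus)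
lemma cinner_minus_right: "cinner x (- (y::'a::complex_inner)) = - cinner x y"
  by (metis cinner_commute cinner_minus_left complex_cnj_minus)
lemma cinner_diff_right: "cinner x (y - (z::'a::complex_inner)) = cinner x y - cinner x z"
  by (metis cinner_add_right cinner_minus_right diff_conv_add_uminus)
lemma cinner_sum_left: "cinner (\<Sum>i\<in>I. f i) (y::'a::complex_inner) = (\<Sum>i\<in>I. cinner (f i) y)"
  by (induction I rule: infinite_finite_induct) (auto simp: cinner_add_left)
lemma cinner_sum_right: "cinner y (\<Sum>i\<in>I. f i) = (\<Sum>i\<in>I. cinner (y::'a::complex_inner) (f i))"
  by (induction I rule: infinite_finite_induct) (auto simp: cinner_add_right)
lemma norm_sq_cinner: "(norm x)^2 = Re (cinner (x::'a::complex_inner) x)"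
  by (simp add: cinner_norm)
lemma cinner_self_eq_zero: "cinner x x = 0 \<longleftrightarrow> (x::'a::complex_inner) = 0"
  by (simp add: cinner_norm)
lemma norm_scaleC: "norm (c *\<^sub>C (x::'a::complex_inner)) = cmod c * norm x"
proof -
  have "complex_of_real ((norm (c *\<^sub>C x))^2) = c * cnj c * complex_of_real ((norm x)^2)"
    by (metis cinner_norm cinner_scaleC_left cinner_scaleC_right mult.assoc)
  also have "c * cnj c = complex_of_real ((cmod c)^2)" by (simp add: complex_norm_square[symmetric])
  finally have "(norm (c *\<^sub>C x))^2 = (cmod c * norm x)^2"
    by (metis of_real_eq_iff of_real_mult power_mult_distrib)
  then show ?thesis by (simp add: power2_eq_iff_nonneg)
qed

lemma pythag: "cinner x y = 0 \<Longrightarrow> (norm (x + y))^2 = (norm x)^2 + (norm (y::'a::complex_inner))^2"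
proof -
  assume h: "cinner x y = 0"
  then have h2: "cinner y x = 0" by (metis cinner_commute complex_cnj_zero)
  have "complex_of_real ((norm (x + y))^2) = cinner (x+y) (x+y)" by (simp add: cinner_norm)
  also have "\<dots> = cinner x x + cinner y y" using h h2 by (simp add: cinner_add_left cinner_add_right)
  finally have "complex_of_real ((norm (x + y))^2) = complex_of_real ((norm x)^2 + (norm y)^2)"
    by (simp add: cinner_norm)
  then show ?thesis using of_real_eq_iff by blast
qed

lemma cauchy_schwarz: "cmod (cinner x y) \<le> norm x * norm (y::'a::complex_inner)"
proof (cases "y = 0")
  case True then show ?thesis by simp
next
  case False
  define t where "t = cinner x y / cinner y y"
  have yy: "cinner y y = complex_of_real ((norm y)^2)" by (simp add: cinner_norm)
  have ny: "norm y > 0" using False by simp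
  have o: "cinner (x - t *\<^sub>C y) y = 0"
    using False by (simp add: cinner_diff_left cinner_scaleC_left t_def cinner_self_eq_zero)
  have "x = (x - t *\<^sub>C y) + t *\<^sub>C y" by simp
  then have "(norm x)^2 = (norm (x - t *\<^sub>C y))^2 + (norm (t *\<^sub>C y))^2"
    by (metis o pythag cinner_scaleC_right mult_zero_right)
  then have "(norm (t *\<^sub>C y))^2 \<le> (norm x)^2" by simp
  then have "norm (t *\<^sub>C y) \<le> norm x" by (simp add: power2_le_iff_abs_le)
  moreover have "norm (t *\<^sub>C y) = cmod (cinner x y) / norm y"
    using ny by (simp add: norm_scaleC t_def yy norm_divide power2_eq_square norm_mult)
  ultimately show ?thesis using ny by (simp add: field_simps)
qed




definition orthon :: "'a::complex_inner set \<Rightarrow> bool" where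
  "orthon E \<longleftrightarrow> (\<forall>e\<in>E. cinner e e = 1) \<and> (\<forall>e\<in>E. \<forall>e'\<in>E. e \<noteq> e' \<longrightarrow> cinner e e' = 0)"

definition oproj :: "'a::complex_inner set \<Rightarrow> 'a \<Rightarrow> 'a" where
  "oproj E x = (\<Sum>e\<in>E. cinner x e *\<^sub>C e)"

lemma orthon_sum_inner:
  assumes "finite E" "orthon E" "e0 \<in> E"
  shows "cinner (\<Sum>e\<in>E. c e *\<^sub>C e) e0 = c e0"
proof -
  have "cinner (\<Sum>e\<in>E. c e *\<^sub>C e) e0 = (\<Sum>e\<in>E. c e * cinner e e0)"
    by (simp add: cinner_sum_left cinner_scaleC_left)
  also have "\<dots> = (\<Sum>e\<in>E. if e = e0 then c e0 else 0)"
    using assms(2,3) unfolding orthon_def by (intro sum.cong) auto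
  also have "\<dots> = c e0" using assms(1,3) by simp
  finally show ?thesis .
qed

lemma orthon_sum_norm:
  assumes "finite E" "orthon E"
  shows "(norm (\<Sum>e\<in>E. c e *\<^sub>C e))^2 = (\<Sum>e\<in>E. (cmod (c e))^2)"
proof -
  let ?s = "\<Sum>e\<in>E. c e *\<^sub>C e"
  have "cinner ?s ?s = (\<Sum>e\<in>E. cnj (c e) * cinner ?s e)"
    by (simp add: cinner_sum_right cinner_scaleC_right)
  also have "\<dots> = (\<Sum>e\<in>E. complex_of_real ((cmod (c e))^2))"
    using assms by (intro sum.cong) (auto simp: orthon_sum_inner complex_norm_square[symmetric] mult.commute)
  finally have "complex_of_real ((norm ?s)^2) = complex_of_real (\<Sum>e\<in>E. (cmod (c e))^2)"
    by (simp add: cinner_norm)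
  then show ?thesis using of_real_eq_iff by blast
qed

lemma orth_span:
  assumes "\<And>e. e \<in> E \<Longrightarrow> cinner u e = 0" "y \<in> cspan E"
  shows "cinner u (y::'a::complex_inner) = 0"
  using assms(2)
proof (induction rule: cvs.span_induct)
  case base
  show ?case unfolding cvs.subspace_def
    by (auto simp: cinner_add_right cinner_scaleC_right)
next
  case (step x) then show ?case using assms(1) by simp
qed

lemma oproj_inner:
  assumes "finite E" "orthon E" "e \<in> E"
  shows "cinner (oproj E x) e = cinner x e"
  unfolding oproj_def using orthon_sum_inner[OF assms] .

lemma oproj_orth:
  assumes "finite E" "orthon E" "y \<in> cspan E"
  shows "cinner (x - oproj E x) y = 0"
proof (rule orth_span[OF _ assms(3)])
  fix e assume "e \<in> E"
  then show "cinner (x - oproj E x) e = 0" by (simp add: cinner_diff_left oproj_inner[OF assms(1,2)])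
qed

lemma oproj_in_span: "oproj E x \<in> cspan E"
  unfolding oproj_def by (intro cvs.span_sum cvs.span_scale cvs.span_base)

lemma oproj_norm: 
  assumes "finite E" "orthon E"
  shows "(norm (oproj E x))^2 = (\<Sum>e\<in>E. (cmod (cinner x e))^2)"
  unfolding oproj_def using orthon_sum_norm[OF assms] .

lemma oproj_pyth:
  assumes "finite E" "orthon E"
  shows "(norm x)^2 = (norm (x - oproj E x))^2 + (norm (oproj E x))^2"
proof -
  have "x = (x - oproj E x) + oproj E x" by simp
  then show ?thesis using pythag[OF oproj_orth[OF assms oproj_in_span]] by metis
qed

lemma bessel:
  assumes "finite E" "orthon E"
  shows "(\<Sum>e\<in>E. (cmod (cinner x e))^2) \<le> (norm x)^2"
  using oproj_pyth[OF assms, of x] oproj_norm[OF assms, of x] by simp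

lemma oproj_le: 
  assumes "finite E" "orthon E"
  shows "norm (x - oproj E x) \<le> norm x" "norm (oproj E x) \<le> norm x"
proof -
  have h: "(norm x)^2 = (norm (x - oproj E x))^2 + (norm (oproj E x))^2" using oproj_pyth[OF assms] .
  show "norm (x - oproj E x) \<le> norm x"
    by (rule power2_le_imp_le) (use h in auto)
  show "norm (oproj E x) \<le> norm x"
    by (rule power2_le_imp_le) (use h in auto)
qed

lemma oproj_best:
  assumes "finite E" "orthon E" "y \<in> cspan E"
  shows "norm (x - oproj E x) \<le> norm (x - y)"
proof -
  have "oproj E x - y \<in> cspan E" using assms(3) oproj_in_span cvs.span_diff by blast
  then have "(norm ((x - oproj E x) + (oproj E x - y)))^2 = (norm (x - oproj E x))^2 + (norm (oproj E x - y))^2"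
    using pythag oproj_orth[OF assms(1,2)] by blast
  then have "(norm (x - oproj E x))^2 \<le> (norm (x - y))^2" by simp
  then show ?thesis by (simp add: power2_le_iff_abs_le)
qed

lemma oproj_id:
  assumes "finite E" "orthon E" "y \<in> cspan E"
  shows "oproj E y = y"
proof -
  have "y - oproj E y \<in> cspan E" using assms(3) oproj_in_span cvs.span_diff by blast
  then have "cinner (y - oproj E y) (y - oproj E y) = 0" using oproj_orth[OF assms(1,2)] by blast
  then show ?thesis by (simp add: cinner_self_eq_zero)
qed

lemma oproj_diff: "oproj E (x - y) = oproj E x - oproj E y"
  unfolding oproj_def by (simp add: cinner_diff_left cvs.scale_left_diff_distrib sum_subtractf)

lemma oproj_add: "oproj E (x + y) = oproj E x + oproj E y"
  unfolding oproj_def by (simp add: cinner_add_left scaleC_add_left sum.distrib)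

lemma oproj_scale: "oproj E (c *\<^sub>C x) = c *\<^sub>C oproj E x"
  unfolding oproj_def by (simp add: cinner_scaleC_left cvs.scale_sum_right scaleC_scaleC)

lemma oproj_zero: "oproj E 0 = 0"
  unfolding oproj_def by simp

lemma oproj_sum: "oproj E (\<Sum>i\<in>I. f i) = (\<Sum>i\<in>I. oproj E (f i))"
proof (induction I rule: infinite_finite_induct)
  case (insert x F) then show ?case by (simp add: oproj_add)
qed (auto simp: oproj_zero)




lemma span_insert_cong:
  assumes "cspan E = cspan F"
  shows "cspan (insert s E) = cspan (insert s (F::'a::complex_inner set))"
  using assms by (simp add: cvs.span_insert)

lemma span_insert_scale:
  assumes "c \<noteq> 0"
  shows "cspan (insert (c *\<^sub>C r) E) = cspan (insert r (E::'a::complex_inner set))"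
proof -
  have 1: "x - k *\<^sub>C (c *\<^sub>C r) = x - (k * c) *\<^sub>C r" for x k by (simp add: scaleC_scaleC)
  have 2: "x - k *\<^sub>C r = x - (k / c) *\<^sub>C (c *\<^sub>C r)" for x k using assms by (simp add: scaleC_scaleC)
  have 3: "(k / c) * c = k" for k using assms by simp
  show ?thesis unfolding cvs.span_insert
  proof (intro Collect_cong iffI)
    fix x assume "\<exists>k. x - k *\<^sub>C c *\<^sub>C r \<in> cspan E"
    then show "\<exists>k. x - k *\<^sub>C r \<in> cspan E" unfolding 1 by blast
  next
    fix x assume "\<exists>k. x - k *\<^sub>C r \<in> cspan E"
    then obtain k where "x - k *\<^sub>C r \<in> cspan E" by blast
    then have "x - (k / c) *\<^sub>C c *\<^sub>C r \<in> cspan E" unfolding 1 3 .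
    then show "\<exists>k. x - k *\<^sub>C c *\<^sub>C r \<in> cspan E" by blast
  qed
qed

lemma gram_schmidt:
  assumes "finite S"
  shows "\<exists>E. finite E \<and> orthon E \<and> cspan E = cspan (S::'a::complex_inner set)"
  using assms
proof (induction S rule: finite_induct)
  case empty
  show ?case by (rule exI[of _ "{}"]) (auto simp: orthon_def)
next
  case (insert s F)
  then obtain E where E: "finite E" "orthon E" "cspan E = cspan F" by blast
  define r where "r = s - oproj E s"
  show ?case
  proof (cases "r = 0")
    case True
    then have "s \<in> cspan E" using oproj_in_span[of E s] unfolding r_def by simp
    then have "s \<in> cspan F" using E by simp
    then show ?thesis using E cvs.span_redundant by metis
  next
    case False
    define c where "c = complex_of_real (inverse (norm r))"
    have c0: "c \<noteq> 0" using False by (simp add: c_def)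
    define e where "e = c *\<^sub>C r"
    have rE: "cinner r e' = 0" if "e' \<in> E" for e'
      unfolding r_def using oproj_orth[OF E(1,2)] cvs.span_base[OF that] by blast
    have eE: "cinner e e' = 0" "cinner e' e = 0" if "e' \<in> E" for e'
      using rE[OF that] by (auto simp: e_def cinner_scaleC_left cinner_scaleC_right 
          cinner_commute[of e' r] intro: complex_cnj_zero)
    have "cinner e e = c * cnj c * cinner r r"
      by (simp add: e_def cinner_scaleC_left cinner_scaleC_right mult.assoc)
    also have "\<dots> = complex_of_real (inverse (norm r) * inverse (norm r) * (norm r)^2)"
      by (simp add: c_def cinner_norm)
    also have "\<dots> = 1"
    proof -
      have "inverse (norm r) * inverse (norm r) * (norm r)^2 = 1" using False by (simp add: power2_eq_square field_simps)
      then show ?thesis by (simp only: of_real_1)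
    qed
    finally have ee: "cinner e e = 1" .
    have orth: "orthon (insert e E)"
      using E(2) eE ee unfolding orthon_def by auto
    have "cspan (insert e E) = cspan (insert r E)" unfolding e_def by (rule span_insert_scale[OF c0])
    also have "\<dots> = cspan (insert s E)"
      by (rule cvs.eq_span_insert_eq) (simp add: r_def oproj_in_span cvs.span_neg)
    also have "\<dots> = cspan (insert s F)" by (rule span_insert_cong[OF E(3)])
    finally show ?thesis using orth E(1) by blast
  qed
qed

lemma orth_vector:
  assumes "finite S" "x \<notin> cspan S"
  shows "\<exists>f. f \<noteq> 0 \<and> f \<in> cspan (insert x S) \<and> (\<forall>s\<in>S. cinner f s = (0::complex))"
proof -
  obtain E where E: "finite E" "orthon E" "cspan E = cspan (S::'a::complex_inner set)"
    using gram_schmidt[OF assms(1)] by blast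
  define f where "f = x - oproj E x"
  have "f \<noteq> 0" using assms(2) oproj_in_span[of E x] E(3) unfolding f_def by auto
  moreover have "f \<in> cspan (insert x S)"
    unfolding f_def
    by (metis E(3) cvs.span_base cvs.span_diff cvs.span_mono insertI1 oproj_in_span subset_iff subset_insertI)
  moreover have "\<forall>s\<in>S. cinner f s = 0"
    using oproj_orth[OF E(1,2)] E(3) cvs.span_base unfolding f_def by blast
  ultimately show ?thesis by blast
qed

lemma span_rep:
  assumes "x \<in> cspan (s ` I)" "finite I"
  shows "\<exists>c. x = (\<Sum>j\<in>I. c j *\<^sub>C (s j::'a::complex_inner))"
  using assms(1)
proof (induction rule: cvs.span_induct)
  case base
  show ?case unfolding cvs.subspace_def
  proof (intro conjI ballI allI)
    show "0 \<in> Collect (\<lambda>x. \<exists>c. x = (\<Sum>j\<in>I. c j *\<^sub>C s j))"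
      by (auto intro!: exI[of _ "\<lambda>_. 0"])
  next
    fix x y assume "x \<in> Collect (\<lambda>x. \<exists>c. x = (\<Sum>j\<in>I. c j *\<^sub>C s j))" "y \<in> Collect (\<lambda>x. \<exists>c. x = (\<Sum>j\<in>I. c j *\<^sub>C s j))"
    then obtain a b where "x = (\<Sum>j\<in>I. a j *\<^sub>C s j)" "y = (\<Sum>j\<in>I. b j *\<^sub>C s j)" by auto
    then have "x + y = (\<Sum>j\<in>I. (a j + b j) *\<^sub>C s j)" by (simp add: scaleC_add_left sum.distrib)
    then show "x + y \<in> Collect (\<lambda>x. \<exists>c. x = (\<Sum>j\<in>I. c j *\<^sub>C s j))" unfolding mem_Collect_eq by (intro exI[of _ "\<lambda>j. a j + b j"])
  next
    fix k x assume "x \<in> Collect (\<lambda>x. \<exists>c. x = (\<Sum>j\<in>I. c j *\<^sub>C s j))"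
    then obtain a where "x = (\<Sum>j\<in>I. a j *\<^sub>C s j)" by auto
    then have "k *\<^sub>C x = (\<Sum>j\<in>I. (k * a j) *\<^sub>C s j)" by (simp add: cvs.scale_sum_right scaleC_scaleC)
    then show "k *\<^sub>C x \<in> Collect (\<lambda>x. \<exists>c. x = (\<Sum>j\<in>I. c j *\<^sub>C s j))" unfolding mem_Collect_eq by (intro exI[of _ "\<lambda>j. k * a j"])
  qed
next
  case (step y)
  then obtain i where i: "i \<in> I" "y = s i" by auto
  have "y = (\<Sum>j\<in>I. (if j = i then 1 else 0) *\<^sub>C s j)"
    using i assms(2) by (simp add: if_distrib[of "\<lambda>c. c *\<^sub>C _"] cvs.scale_zero_left scaleC_one cong: if_cong)
  then show ?case by (intro exI[of _ "\<lambda>j. if j = i then 1 else 0"])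
qed




lemma onb_inner: "orthonormal_basis v \<Longrightarrow> cinner (v i) (v j) = (if i = j then 1 else 0)"
  unfolding orthonormal_basis_def by blast

lemma onb_inj: assumes "orthonormal_basis v" shows "inj v"
proof (rule injI)
  fix i j assume "v i = v j"
  then have "cinner (v i) (v j) = 1" using onb_inner[OF assms, of i i] by simp
  then show "i = j" using onb_inner[OF assms, of i j] by (auto split: if_splits)
qed

lemma onb_orthon: assumes "orthonormal_basis v" shows "orthon (v ` I)"
  unfolding orthon_def using onb_inner[OF assms] by auto

lemma onb_sum_reindex: 
  assumes "orthonormal_basis v" shows "(\<Sum>e\<in>v ` I. g e) = (\<Sum>k\<in>I. g (v k))"
  using sum.reindex[of v I g] onb_inj[OF assms] by (simp add: inj_on_subset)

lemma onb_oproj: 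
  assumes "orthonormal_basis v"
  shows "oproj (v ` I) x = (\<Sum>k\<in>I. cinner x (v k) *\<^sub>C v k)"
  unfolding oproj_def onb_sum_reindex[OF assms] ..

lemma onb_oproj_norm:
  assumes "orthonormal_basis v" "finite I"
  shows "(norm (oproj (v ` I) x))^2 = (\<Sum>k\<in>I. (cmod (cinner x (v k)))^2)"
  using oproj_norm[OF finite_imageI[OF assms(2)] onb_orthon[OF assms(1)], of x]
  unfolding onb_sum_reindex[OF assms(1)] .

lemma onb_bessel:
  assumes "orthonormal_basis v" "finite I"
  shows "(\<Sum>k\<in>I. (cmod (cinner x (v k)))^2) \<le> (norm x)^2"
  using bessel[OF finite_imageI[OF assms(2)] onb_orthon[OF assms(1)], of x]
  unfolding onb_sum_reindex[OF assms(1)] .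

lemma span_range_union:
  fixes v :: "nat \<Rightarrow> 'a::complex_inner"
  assumes "y \<in> cspan (range v)"
  shows "\<exists>M. y \<in> cspan (v ` {..<M})"
  using assms
proof (induction rule: cvs.span_induct)
  case base
  show ?case unfolding cvs.subspace_def
  proof (intro conjI ballI allI)
    show "0 \<in> Collect (\<lambda>y. \<exists>M. y \<in> cspan (v ` {..<M}))" by (auto intro: cvs.span_zero)
  next
    fix x y assume "x \<in> Collect (\<lambda>y. \<exists>M. y \<in> cspan (v ` {..<M}))" "y \<in> Collect (\<lambda>y. \<exists>M. y \<in> cspan (v ` {..<M}))"
    then obtain M1 M2 where "x \<in> cspan (v ` {..<M1})" "y \<in> cspan (v ` {..<M2})" by auto
    moreover have "cspan (v ` {..<M1}) \<subseteq> cspan (v ` {..<max M1 M2})" "cspan (v ` {..<M2}) \<subseteq> cspan (v ` {..<max M1 M2})"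
      by (auto intro!: cvs.span_mono image_mono simp: less_max_iff_disj)
    ultimately have "x + y \<in> cspan (v ` {..<max M1 M2})" by (meson cvs.span_add subsetD)
    then show "x + y \<in> Collect (\<lambda>y. \<exists>M. y \<in> cspan (v ` {..<M}))" by blast
  next
    fix k x assume "x \<in> Collect (\<lambda>y. \<exists>M. y \<in> cspan (v ` {..<M}))"
    then show "k *\<^sub>C x \<in> Collect (\<lambda>y. \<exists>M. y \<in> cspan (v ` {..<M}))" by (auto intro: cvs.span_scale)
  qed
next
  case (step x)
  then obtain i where "x = v i" by auto
  then have "x \<in> cspan (v ` {..<Suc i})" by (auto intro: cvs.span_base)
  then show ?case by blast
qed

lemma parseval:
  assumes onb: "orthonormal_basis v"
  shows "(\<lambda>k. (cmod (cinner f (v k)))^2) sums (norm f)^2"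
  unfolding sums_def
proof (rule LIMSEQ_I)
  fix r :: real assume r: "r > 0"
  have "f \<in> closure (cspan (range v))" using onb unfolding orthonormal_basis_def by simp
  then obtain y where y: "y \<in> cspan (range v)" "dist y f < sqrt r"
  proof -
    have "sqrt r > 0" using r by simp
    then show ?thesis using that closure_approachable[of f "cspan (range v)"] \<open>f \<in> closure _\<close> by blast
  qed
  obtain M where M: "y \<in> cspan (v ` {..<M})" using span_range_union[OF y(1)] by blast
  have "norm ((\<Sum>k<n. (cmod (cinner f (v k)))^2) - (norm f)^2) < r" if n: "n \<ge> M" for n
  proof -
    let ?E = "v ` {..<n}"
    have fin: "finite ?E" by simp
    have yE: "y \<in> cspan ?E" using M cvs.span_mono[OF image_mono[OF lessThan_subset_iff[THEN iffD2, OF n]]] by blast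
    have s: "(\<Sum>k<n. (cmod (cinner f (v k)))^2) = (norm (oproj ?E f))^2"
      using onb_oproj_norm[OF onb, of "{..<n}" f] by (simp only: finite_lessThan)
    have pyth: "(norm f)^2 = (norm (f - oproj ?E f))^2 + (norm (oproj ?E f))^2"
      using oproj_pyth[OF fin onb_orthon[OF onb]] .
    have "norm (f - oproj ?E f) \<le> norm (f - y)" using oproj_best[OF fin onb_orthon[OF onb] yE] .
    also have "\<dots> < sqrt r" using y(2) by (metis dist_commute dist_norm)
    finally have "(norm (f - oproj ?E f))^2 < (sqrt r)^2"
      by (intro power_strict_mono) auto
    then have "(norm (f - oproj ?E f))^2 < r" using r by simp
    then show ?thesis unfolding s using pyth r by (simp add: abs_if)
  qed
  then show "\<exists>no. \<forall>n\<ge>no. norm ((\<Sum>k<n. (cmod (cinner f (v k)))^2) - (norm f)^2) < r" by blast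
qed




lemma orth_proj_eq:
  assumes "finite E" "orthon E"
  shows "orth_proj (cspan E) x = oproj E x"
  unfolding orth_proj_def
proof (rule the_equality)
  show "oproj E x \<in> cspan E \<and> (\<forall>z\<in>cspan E. cinner (x - oproj E x) z = 0)"
    using oproj_in_span oproj_orth[OF assms] by blast
next
  fix y assume y: "y \<in> cspan E \<and> (\<forall>z\<in>cspan E. cinner (x - y) z = 0)"
  have z: "y - oproj E x \<in> cspan E" using y oproj_in_span cvs.span_diff by blast
  have "cinner (y - oproj E x) (y - oproj E x) = cinner (x - oproj E x) (y - oproj E x) - cinner (x - y) (y - oproj E x)"
    by (simp add: cinner_diff_left)
  also have "\<dots> = 0" using z y oproj_orth[OF assms] by simp
  finally show "y = oproj E x" by (simp add: cinner_self_eq_zero)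
qed

lemma orthon_indep:
  assumes "finite E" "orthon E"
  shows "cindependent E"
proof
  assume "cvs.dependent E"
  then obtain u e where e: "e \<in> E" "u e \<noteq> 0" "(\<Sum>v\<in>E. u v *\<^sub>C v) = 0"
    using cvs.dependent_finite[OF assms(1)] by blast
  have "cinner (\<Sum>v\<in>E. u v *\<^sub>C v) e = u e" using orthon_sum_inner[OF assms e(1)] .
  then show False using e by simp
qed

lemma onb_coef:
  assumes "orthonormal_basis v" "finite I" "k \<in> I"
  shows "cinner (\<Sum>i\<in>I. c i *\<^sub>C v i) (v k) = c k"
proof -
  have "cinner (\<Sum>i\<in>I. c i *\<^sub>C v i) (v k) = (\<Sum>i\<in>I. c i * cinner (v i) (v k))"
    by (simp add: cinner_sum_left cinner_scaleC_left)
  also have "\<dots> = (\<Sum>i\<in>I. if i = k then c k else 0)"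
    using onb_inner[OF assms(1)] by (intro sum.cong) auto
  also have "\<dots> = c k" using assms(2,3) by simp
  finally show ?thesis .
qed

lemma onb_coef0:
  assumes "orthonormal_basis v" "k \<notin> I"
  shows "cinner (\<Sum>i\<in>I. c i *\<^sub>C v i) (v k) = 0"
proof -
  have "cinner (\<Sum>i\<in>I. c i *\<^sub>C v i) (v k) = (\<Sum>i\<in>I. c i * cinner (v i) (v k))"
    by (simp add: cinner_sum_left cinner_scaleC_left)
  also have "\<dots> = 0"
    using onb_inner[OF assms(1)] assms(2) by (intro sum.neutral) auto
  finally show ?thesis .
qed

lemma onb_sum_norm:
  assumes "orthonormal_basis v" "finite I"
  shows "(norm (\<Sum>i\<in>I. c i *\<^sub>C v i))^2 = (\<Sum>i\<in>I. (cmod (c i))^2)"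
proof -
  let ?y = "\<Sum>i\<in>I. c i *\<^sub>C v i"
  have "?y \<in> cspan (v ` I)" by (intro cvs.span_sum cvs.span_scale cvs.span_base) auto
  then have "oproj (v ` I) ?y = ?y"
    using oproj_id[OF finite_imageI[OF assms(2)] onb_orthon[OF assms(1)]] by blast
  then have "(norm ?y)^2 = (\<Sum>k\<in>I. (cmod (cinner ?y (v k)))^2)"
    using onb_oproj_norm[OF assms, of ?y] by simp
  also have "\<dots> = (\<Sum>i\<in>I. (cmod (c i))^2)"
    using onb_coef[OF assms] by (intro sum.cong) auto
  finally show ?thesis .
qed

lemma indep_unique:
  fixes N :: nat
  assumes "inj_on s {..<N}" "cindependent (s ` {..<N})"
    and "(\<Sum>j<N. a j *\<^sub>C s j) = (\<Sum>j<N. c j *\<^sub>C (s j::'a::complex_inner))" "j < N"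
  shows "a j = c j"
proof -
  define u where "u y = a (the_inv_into {..<N} s y) - c (the_inv_into {..<N} s y)" for y
  have "(\<Sum>y\<in>s ` {..<N}. u y *\<^sub>C y) = (\<Sum>j<N. u (s j) *\<^sub>C s j)"
    using sum.reindex[OF assms(1)] by simp
  also have "\<dots> = (\<Sum>j<N. (a j - c j) *\<^sub>C s j)"
    using the_inv_into_f_f[OF assms(1)] by (intro sum.cong) (auto simp: u_def)
  also have "\<dots> = (\<Sum>j<N. a j *\<^sub>C s j) - (\<Sum>j<N. c j *\<^sub>C s j)"
    by (simp add: cvs.scale_left_diff_distrib sum_subtractf)
  also have "\<dots> = 0" using assms(3) by simp
  finally have "(\<Sum>y\<in>s ` {..<N}. u y *\<^sub>C y) = 0" .
  moreover have "finite (s ` {..<N})" by simp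
  ultimately have "\<forall>y\<in>s ` {..<N}. u y = 0" using assms(2) cvs.dependent_finite[of "s ` {..<N}"] by blast
  then have "u (s j) = 0" using assms(4) by auto
  then show ?thesis using the_inv_into_f_f[OF assms(1)] assms(4) by (simp add: u_def)
qed

lemma lin_alg:
  fixes s :: "nat \<Rightarrow> 'a::complex_inner"
  assumes E: "finite E" "cindependent E" "card E = N" "N \<ge> 1"
    and S: "s ` {..<N} \<subseteq> cspan E"
  shows "cspan (s ` {..<N}) = cspan E \<longleftrightarrow> inj_on s {..<N} \<and> cindependent (s ` {..<N})"
proof
  assume sp: "cspan (s ` {..<N}) = cspan E"
  have fin: "finite (s ` {..<N})" by simp
  have ES: "E \<subseteq> cspan (s ` {..<N})" using sp cvs.span_superset by blast
  have "card E \<le> card (s ` {..<N})" using cvs.independent_span_bound[OF fin E(2) ES] by simp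
  moreover have "card (s ` {..<N}) \<le> N" using card_image_le[of "{..<N}" s] by simp
  ultimately have cS: "card (s ` {..<N}) = N" using E(3) by simp
  then have inj: "inj_on s {..<N}" by (intro eq_card_imp_inj_on) auto
  have ind: "cindependent (s ` {..<N})"
  proof
    assume "cvs.dependent (s ` {..<N})"
    then obtain a where a: "a \<in> s ` {..<N}" "a \<in> cspan (s ` {..<N} - {a})"
      unfolding cvs.dependent_def by blast
    have "insert a (s ` {..<N} - {a}) = s ` {..<N}" using a(1) by blast
    then have "cspan (s ` {..<N} - {a}) = cspan (s ` {..<N})" using cvs.span_redundant[OF a(2)] by simp
    then have "E \<subseteq> cspan (s ` {..<N} - {a})" using ES by simp
    then have "card E \<le> card (s ` {..<N} - {a})" using cvs.independent_span_bound[OF _ E(2)] fin by blast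
    also have "\<dots> = N - 1" using cS a(1) fin by (simp add: card_Diff_singleton)
    finally show False using E(3,4) by simp
  qed
  show "inj_on s {..<N} \<and> cindependent (s ` {..<N})" using inj ind by blast
next
  assume h: "inj_on s {..<N} \<and> cindependent (s ` {..<N})"
  have cS: "card (s ` {..<N}) = N" using h card_image by fastforce
  have "E \<subseteq> cspan (s ` {..<N})"
  proof
    fix e assume e: "e \<in> E"
    show "e \<in> cspan (s ` {..<N})"
    proof (rule ccontr)
      assume ne: "e \<notin> cspan (s ` {..<N})"
      then have ind: "cindependent (insert e (s ` {..<N}))" using h cvs.independent_insertI by blast
      have "insert e (s ` {..<N}) \<subseteq> cspan E" using S e cvs.span_base by blast
      then have "card (insert e (s ` {..<N})) \<le> card E" using cvs.independent_span_bound[OF E(1) ind] by blast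
      moreover have "card (insert e (s ` {..<N})) = N + 1"
        using ne cvs.span_base[of e "s ` {..<N}"] cS by (auto simp add: card_insert_if)
      ultimately show False using E(3) by simp
    qed
  qed
  then have "cspan E \<subseteq> cspan (s ` {..<N})" by (metis cvs.span_mono cvs.span_span)
  moreover have "cspan (s ` {..<N}) \<subseteq> cspan E" using S by (metis cvs.span_mono cvs.span_span)
  ultimately show "cspan (s ` {..<N}) = cspan E" by blast
qed




locale setting =
  fixes v w :: "nat \<Rightarrow> 'a::complex_inner" and N :: nat
  assumes onb: "orthonormal_basis v" and unit: "\<And>j. norm (w j) = 1" and N: "N \<ge> 1"
begin

abbreviation "EE \<equiv> v ` {..<N}"
abbreviation "sv j \<equiv> oproj EE (w j)"
abbreviation "BB j \<equiv> (if j < N then w j else v j)"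

lemma finE: "finite EE" by simp
lemma orthE: "orthon EE" using onb_orthon[OF onb] .
lemma cardE: "card EE = N" using card_image[OF inj_on_subset[OF onb_inj[OF onb]]] by simp
lemma indE: "cindependent EE" using orthon_indep[OF finE orthE] .
lemma sE: "sv j \<in> cspan EE" by (rule oproj_in_span)
lemma perp1: "z \<in> cspan EE \<Longrightarrow> cinner (x - oproj EE x) z = 0"
  using oproj_orth[OF finE orthE] by blast
lemma perp2: "z \<in> cspan EE \<Longrightarrow> cinner z (x - oproj EE x) = 0"
  using perp1 by (metis cinner_commute complex_cnj_zero)
lemma vperp: "k \<ge> N \<Longrightarrow> z \<in> cspan EE \<Longrightarrow> cinner z (v k) = 0"
proof -
  assume k: "k \<ge> N" and z: "z \<in> cspan EE"
  have "cinner (v k) z = 0"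
  proof (rule orth_span[OF _ z])
    fix e assume "e \<in> EE"
    then obtain i where "i < N" "e = v i" by auto
    then show "cinner (v k) e = 0" using k onb_inner[OF onb, of k i] by simp
  qed
  then show ?thesis by (metis cinner_commute complex_cnj_zero)
qed

lemma nospan_noframe:
  assumes ns: "cspan (sv ` {..<N}) \<noteq> cspan EE"
  shows "\<not> is_frame BB"
proof
  assume fr: "is_frame BB"
  have sub: "sv ` {..<N} \<subseteq> cspan EE" using sE by blast
  have "\<exists>e\<in>EE. e \<notin> cspan (sv ` {..<N})"
  proof (rule ccontr)
    assume "\<not> ?thesis"
    then have "EE \<subseteq> cspan (sv ` {..<N})" by blast
    then have "cspan EE \<subseteq> cspan (sv ` {..<N})" by (rule cvs.span_minimal[OF _ cvs.subspace_span])
    moreover have "cspan (sv ` {..<N}) \<subseteq> cspan EE" using sub by (rule cvs.span_minimal[OF _ cvs.subspace_span])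
    ultimately show False using ns by blast
  qed
  then obtain e where e: "e \<in> EE" "e \<notin> cspan (sv ` {..<N})" by blast
  obtain f where f0: "f \<noteq> 0 \<and> f \<in> cspan (insert e (sv ` {..<N})) \<and> (\<forall>x\<in>sv ` {..<N}. cinner f x = 0)"
    using orth_vector[OF finite_imageI[OF finite_lessThan] e(2)] by (rule exE)
  have f: "f \<noteq> 0" "f \<in> cspan (insert e (sv ` {..<N}))" "\<forall>x\<in>sv ` {..<N}. cinner f x = 0"
    using f0 by (blast, blast, blast)
  have fE: "f \<in> cspan EE"
  proof -
    have "insert e (sv ` {..<N}) \<subseteq> cspan EE" by (rule insert_subsetI[OF cvs.span_base[OF e(1)] sub])
    then have "cspan (insert e (sv ` {..<N})) \<subseteq> cspan EE" by (rule cvs.span_minimal[OF _ cvs.subspace_span])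
    then show ?thesis using f(2) by (rule subsetD)
  qed
  have z: "cinner f (BB j) = 0" for j
  proof (cases "j < N")
    case True
    have "cinner f (w j) = cinner f (sv j) + cinner f (w j - sv j)" by (simp add: cinner_diff_right)
    also have "\<dots> = 0" using f(3) True perp2[OF fE] by simp
    finally show ?thesis using True by simp
  next
    case False
    then show ?thesis using vperp[OF _ fE] by simp
  qed
  from fr obtain A where A: "A > 0" "\<And>f. A * (norm f)^2 \<le> (\<Sum>j. (cmod (cinner f (BB j)))\<^sup>2)"
    unfolding is_frame_def by blast
  have "A * (norm f)^2 \<le> 0" using A(2)[of f] z by simp
  moreover have "A * (norm f)^2 > 0" using A(1) f(1) by simp
  ultimately show False by simp
qed

end



context setting begin

lemma coef_exists:
  assumes sp: "cspan (sv ` {..<N}) = cspan EE"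
  obtains d where "\<And>k. k < N \<Longrightarrow> v k = (\<Sum>j<N. d k j *\<^sub>C sv j)"
proof -
  have "\<forall>k. \<exists>c. k < N \<longrightarrow> v k = (\<Sum>j<N. c j *\<^sub>C sv j)"
  proof
    fix k
    show "\<exists>c. k < N \<longrightarrow> v k = (\<Sum>j<N. c j *\<^sub>C sv j)"
    proof (cases "k < N")
      case True
      then have "v k \<in> cspan EE" by (intro cvs.span_base) simp
      then have "v k \<in> cspan (sv ` {..<N})" using sp by simp
      then obtain c where "v k = (\<Sum>j\<in>{..<N}. c j *\<^sub>C sv j)"
        using span_rep[of "v k" "\<lambda>j. sv j" "{..<N}"] by auto
      then show ?thesis by auto
    qed auto
  qed
  then obtain d where "\<forall>k. k < N \<longrightarrow> v k = (\<Sum>j<N. d k j *\<^sub>C sv j)" by (rule choice[THEN exE])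
  then show ?thesis using that by blast
qed

lemma D_bound:
  fixes d :: "nat \<Rightarrow> nat \<Rightarrow> complex"
  assumes "k < N" "j < N"
  shows "cmod (d k j) \<le> (\<Sum>k<N. \<Sum>j<N. cmod (d k j))" "(\<Sum>k<N. cmod (d k j)) \<le> (\<Sum>k<N. \<Sum>j<N. cmod (d k j))"
proof -
  have "cmod (d k j) \<le> (\<Sum>j<N. cmod (d k j))" using assms by (intro member_le_sum) auto
  also have "\<dots> \<le> (\<Sum>k<N. \<Sum>j<N. cmod (d k j))" using assms by (intro member_le_sum[of k "{..<N}"]) (auto intro: sum_nonneg)
  finally show "cmod (d k j) \<le> (\<Sum>k<N. \<Sum>j<N. cmod (d k j))" .
  have "(\<Sum>k<N. cmod (d k j)) \<le> (\<Sum>k<N. \<Sum>j<N. cmod (d k j))"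
    using assms by (intro sum_mono member_le_sum) auto
  then show "(\<Sum>k<N. cmod (d k j)) \<le> (\<Sum>k<N. \<Sum>j<N. cmod (d k j))" .
qed

lemma frame_sums:
  "(\<lambda>j. (cmod (cinner f (BB j)))\<^sup>2) sums
     ((\<Sum>j<N. (cmod (cinner f (w j)))^2) + (norm (f - oproj EE f))^2)"
proof -
  let ?g = "\<lambda>j. (cmod (cinner f (v j)))\<^sup>2"
  let ?h = "\<lambda>j. (cmod (cinner f (BB j)))\<^sup>2"
  have g: "?g sums (norm f)^2" by (rule parseval[OF onb])
  have "(\<lambda>j. ?h j - ?g j) sums (\<Sum>j\<in>{..<N}. ?h j - ?g j)"
    by (rule sums_finite) auto
  from sums_add[OF g this] have "(\<lambda>j. ?g j + (?h j - ?g j)) sums ((norm f)^2 + (\<Sum>j\<in>{..<N}. ?h j - ?g j))" .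
  moreover have "(\<Sum>j\<in>{..<N}. ?h j - ?g j) = (\<Sum>j<N. (cmod (cinner f (w j)))^2) - (\<Sum>j<N. ?g j)"
    by (simp add: sum_subtractf)
  moreover have "(norm f)^2 = (norm (f - oproj EE f))^2 + (\<Sum>j<N. ?g j)"
    using oproj_pyth[OF finE orthE, of f] onb_oproj_norm[OF onb, of "{..<N}" f] by simp
  ultimately show ?thesis by (simp add: add.commute)
qed

lemma span_frame:
  assumes sp: "cspan (sv ` {..<N}) = cspan EE"
  shows "is_frame BB"
proof -
  obtain d where d: "\<And>k. k < N \<Longrightarrow> v k = (\<Sum>j<N. d k j *\<^sub>C sv j)" using coef_exists[OF sp] by blast
  define D where "D = (\<Sum>k<N. \<Sum>j<N. cmod (d k j))"
  have D0: "D \<ge> 0" unfolding D_def by (intro sum_nonneg) auto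
  have dD: "cmod (d k j) \<le> D" if "k < N" "j < N" for k j using D_bound[OF that] unfolding D_def by blast
  define K where "K = 1 + 4 * real N ^ 3 * D^2"
  have K1: "K \<ge> 1" unfolding K_def by simp
  have main: "(norm f)^2 \<le> K * ((\<Sum>j<N. (cmod (cinner f (w j)))^2) + (norm (f - oproj EE f))^2)
      \<and> (\<Sum>j<N. (cmod (cinner f (w j)))^2) + (norm (f - oproj EE f))^2 \<le> (real N + 1) * (norm f)^2" for f
  proof -
    define Sf where "Sf = (\<Sum>j<N. (cmod (cinner f (w j)))^2)"
    define Pf where "Pf = oproj EE f"
    define t where "t = norm (f - Pf)"
    define R where "R = (\<Sum>k<N. (cmod (cinner f (v k)))^2)"
    define q where "q = sqrt (Sf + t^2)"
    have Sf0: "Sf \<ge> 0" unfolding Sf_def by (intro sum_nonneg) auto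
    have h1: "(norm f)^2 = t^2 + R"
      using oproj_pyth[OF finE orthE, of f] onb_oproj_norm[OF onb, of "{..<N}" f]
      unfolding t_def Pf_def R_def by simp
    have PfE: "Pf \<in> cspan EE" unfolding Pf_def by (rule oproj_in_span)
    have aq: "cmod (cinner f (w j)) \<le> q" if "j < N" for j
    proof -
      have "(cmod (cinner f (w j)))^2 \<le> Sf" unfolding Sf_def using that by (intro member_le_sum) auto
      then have "(cmod (cinner f (w j)))^2 \<le> Sf + t^2" by (smt (verit) zero_le_power2)
      then show ?thesis unfolding q_def by (intro real_le_rsqrt)
    qed
    have tq: "t \<le> q" unfolding q_def using Sf0 by (intro real_le_rsqrt) simp
    have q0: "q \<ge> 0" unfolding q_def using Sf0 by simp
    have sj: "cmod (cinner f (sv j)) \<le> 2 * q" if "j < N" for j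
    proof -
      have e1: "cinner (f - Pf) (sv j) = 0" unfolding Pf_def by (rule perp1[OF sE])
      have e2: "cinner Pf (w j - sv j) = 0" by (rule perp2[OF PfE])
      have "cinner f (sv j) = cinner f (w j) - cinner (f - Pf) (w j)"
        using e1 e2 by (simp add: cinner_diff_left cinner_diff_right)
      then have "cmod (cinner f (sv j)) \<le> cmod (cinner f (w j)) + cmod (cinner (f - Pf) (w j))"
        by (metis norm_triangle_ineq4)
      also have "cmod (cinner (f - Pf) (w j)) \<le> t" using cauchy_schwarz[of "f - Pf" "w j"] unit unfolding t_def by simp
      finally show ?thesis using aq[OF that] tq by simp
    qed
    have vk: "(cmod (cinner f (v k)))^2 \<le> 4 * real N ^ 2 * D^2 * q^2" if "k < N" for k
    proof -
      have "cinner f (v k) = (\<Sum>j<N. cnj (d k j) * cinner f (sv j))"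
        using d[OF that] by (simp add: cinner_sum_right cinner_scaleC_right)
      then have "cmod (cinner f (v k)) \<le> (\<Sum>j<N. cmod (d k j) * cmod (cinner f (sv j)))"
        by (metis (no_types, lifting) complex_mod_cnj norm_mult norm_sum sum.cong)
      also have "\<dots> \<le> (\<Sum>j<N. D * (2 * q))"
        using dD[OF that] sj D0 by (intro sum_mono mult_mono) auto
      also have "\<dots> = 2 * real N * D * q" by simp
      finally have "cmod (cinner f (v k)) \<le> 2 * real N * D * q" .
      then have "(cmod (cinner f (v k)))^2 \<le> (2 * real N * D * q)^2" by (intro power_mono) auto
      then show ?thesis by (simp add: power_mult_distrib)
    qed
    have "R \<le> (\<Sum>k<N. 4 * real N ^ 2 * D^2 * q^2)" unfolding R_def using vk by (intro sum_mono) auto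
    also have "\<dots> = 4 * real N ^ 3 * D^2 * (Sf + t^2)" using q0 Sf0 unfolding q_def by (simp add: power_def)
    finally have "R \<le> 4 * real N ^ 3 * D^2 * (Sf + t^2)" .
    then have low: "(norm f)^2 \<le> K * (Sf + t^2)" using h1 Sf0 unfolding K_def by (simp add: algebra_simps)
    have cs: "cmod (cinner f (w j)) \<le> norm f" for j using cauchy_schwarz[of f "w j"] unit[of j] by simp
    have "Sf \<le> (\<Sum>j<N. (norm f)^2)" unfolding Sf_def
      using cs by (intro sum_mono power_mono) auto
    then have "Sf \<le> real N * (norm f)^2" by simp
    moreover have "t^2 \<le> (norm f)^2" unfolding t_def Pf_def using oproj_le(1)[OF finE orthE, of f]
      by (intro power_mono) auto
    ultimately have "Sf + t^2 \<le> (real N + 1) * (norm f)^2" by (simp add: algebra_simps)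
    then show ?thesis using low unfolding Sf_def t_def Pf_def by simp
  qed
  have A0: "0 < 1 / K" using K1 by simp
  have AB: "1 / K \<le> real N + 1"
  proof -
    have "1 / K \<le> 1" using K1 by simp
    then show ?thesis by linarith
  qed
  have C: "summable (\<lambda>j. (cmod (cinner f (BB j)))\<^sup>2) \<and>
          1 / K * (norm f)\<^sup>2 \<le> (\<Sum>j. (cmod (cinner f (BB j)))\<^sup>2) \<and>
          (\<Sum>j. (cmod (cinner f (BB j)))\<^sup>2) \<le> (real N + 1) * (norm f)\<^sup>2" for f
  proof (intro conjI)
    show "summable (\<lambda>j. (cmod (cinner f (BB j)))\<^sup>2)" using frame_sums sums_summable by blast
    have eq: "(\<Sum>j. (cmod (cinner f (BB j)))\<^sup>2) = (\<Sum>j<N. (cmod (cinner f (w j)))^2) + (norm (f - oproj EE f))^2"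
      using frame_sums[of f] by (rule sums_unique[symmetric])
    show "1 / K * (norm f)\<^sup>2 \<le> (\<Sum>j. (cmod (cinner f (BB j)))\<^sup>2)"
      unfolding eq using main[of f] K1 by (simp add: field_simps)
    show "(\<Sum>j. (cmod (cinner f (BB j)))\<^sup>2) \<le> (real N + 1) * (norm f)\<^sup>2"
      unfolding eq using main[of f] by simp
  qed
  show ?thesis unfolding is_frame_def
    apply (rule exI[of _ "1/K"], rule exI[of _ "real N + 1"])
    apply (rule conjI[OF A0], rule conjI[OF AB], rule allI, rule C)
    done
qed

end



context setting begin

lemma split_J:
  fixes g :: "nat \<Rightarrow> 'b::comm_monoid_add"
  assumes "finite J"
  shows "(\<Sum>j\<in>J. g j) = (\<Sum>j\<in>J \<inter> {..<N}. g j) + (\<Sum>j\<in>J - {..<N}. g j)"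
  using sum.Int_Diff[OF assms, of g "{..<N}"] .

lemma restrict_N:
  fixes g :: "nat \<Rightarrow> 'b::comm_monoid_add"
  shows "(\<Sum>j\<in>J \<inter> {..<N}. g j) = (\<Sum>j<N. if j \<in> J then g j else 0)"
proof -
  have "(\<Sum>j<N. if j \<in> J then g j else 0) = (\<Sum>j\<in>{..<N} \<inter> J. g j)"
    using sum.inter_restrict[of "{..<N}" g J] by simp
  then show ?thesis by (simp add: Int_commute)
qed

lemma vnorm: "norm (v k) = 1"
proof -
  have "(norm (v k))^2 = 1" using onb_inner[OF onb, of k k] by (simp add: norm_sq_cinner)
  then have "norm (v k) = 1 \<or> norm (v k) = - 1" by (simp add: power2_eq_1_iff)
  then show ?thesis using norm_ge_zero[of "v k"] by linarith
qed

lemma span_riesz: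
  assumes sp: "cspan (sv ` {..<N}) = cspan EE"
  shows "is_riesz_sequence BB"
proof -
  have sub: "sv ` {..<N} \<subseteq> cspan EE" using sE by blast
  have ii: "inj_on (\<lambda>j. sv j) {..<N} \<and> cindependent (sv ` {..<N})"
    by (rule lin_alg[OF finE indE cardE N sub, THEN iffD1, OF sp])
  obtain d where d: "\<And>k. k < N \<Longrightarrow> v k = (\<Sum>j<N. d k j *\<^sub>C sv j)" using coef_exists[OF sp] by blast
  define D where "D = (\<Sum>k<N. \<Sum>j<N. cmod (d k j))"
  have D0: "D \<ge> 0" unfolding D_def by (intro sum_nonneg) auto
  have dD: "(\<Sum>k<N. cmod (d k j)) \<le> D" if "j < N" for j
    using D_bound[OF _ that, of 0 d] N unfolding D_def by simp
  define K where "K = real N * D^2 + (1 + real N * D)^2"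
  have K1: "K \<ge> 1" unfolding K_def using D0 
    by (smt (verit) mult_nonneg_nonneg of_nat_0_le_iff one_le_power zero_le_power2)
  have main: "(\<Sum>j\<in>J. (cmod (a j))\<^sup>2) \<le> K * (norm (\<Sum>j\<in>J. a j *\<^sub>C BB j))\<^sup>2 \<and>
     (norm (\<Sum>j\<in>J. a j *\<^sub>C BB j))\<^sup>2 \<le> (real N + 1)^2 * (\<Sum>j\<in>J. (cmod (a j))\<^sup>2)"
    if J: "finite J" for J a
  proof -
    define x where "x = (\<Sum>j\<in>J. a j *\<^sub>C BB j)"
    define X where "X = (\<Sum>j\<in>J \<inter> {..<N}. a j *\<^sub>C w j)"
    define Y where "Y = (\<Sum>j\<in>J - {..<N}. a j *\<^sub>C v j)"
    define S1 where "S1 = (\<Sum>j\<in>J \<inter> {..<N}. (cmod (a j))\<^sup>2)"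
    define S2 where "S2 = (\<Sum>j\<in>J - {..<N}. (cmod (a j))\<^sup>2)"
    define a' where "a' j = (if j \<in> J then a j else 0)" for j
    have fin2: "finite (J - {..<N})" using J by simp
    have S: "(\<Sum>j\<in>J. (cmod (a j))\<^sup>2) = S1 + S2" unfolding S1_def S2_def by (rule split_J[OF J])
    have S10: "S1 \<ge> 0" "S2 \<ge> 0" unfolding S1_def S2_def by (auto intro: sum_nonneg)
    have xXY: "x = X + Y"
    proof -
      have "x = (\<Sum>j\<in>J \<inter> {..<N}. a j *\<^sub>C BB j) + (\<Sum>j\<in>J - {..<N}. a j *\<^sub>C BB j)"
        unfolding x_def by (rule split_J[OF J])
      also have "(\<Sum>j\<in>J \<inter> {..<N}. a j *\<^sub>C BB j) = X" unfolding X_def by (intro sum.cong) auto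
      also have "(\<Sum>j\<in>J - {..<N}. a j *\<^sub>C BB j) = Y" unfolding Y_def by (intro sum.cong) auto
      finally show ?thesis .
    qed
    have nY: "(norm Y)^2 = S2" unfolding Y_def S2_def by (rule onb_sum_norm[OF onb fin2])
    have nX: "norm X \<le> (\<Sum>j\<in>J \<inter> {..<N}. cmod (a j))" unfolding X_def
      by (rule order_trans[OF norm_sum]) (simp add: norm_scaleC unit)
    have a'sum: "(\<Sum>j\<in>J \<inter> {..<N}. cmod (a j)) = (\<Sum>j<N. cmod (a' j))"
      unfolding restrict_N a'_def by (intro sum.cong) auto
    have a'sum2: "S1 = (\<Sum>j<N. (cmod (a' j))^2)"
      unfolding S1_def restrict_N a'_def by (intro sum.cong) auto
    define q where "q = sqrt (S1 + S2)"
    have q0: "q \<ge> 0" unfolding q_def using S10 by simp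
    have aq: "cmod (a j) \<le> q" if "j \<in> J" for j
    proof -
      have "(cmod (a j))^2 \<le> (\<Sum>j\<in>J. (cmod (a j))\<^sup>2)" using that J by (intro member_le_sum) auto
      then show ?thesis unfolding q_def S[symmetric] by (intro real_le_rsqrt)
    qed
    have "(\<Sum>j\<in>J \<inter> {..<N}. cmod (a j)) \<le> (\<Sum>j\<in>J \<inter> {..<N}. q)" using aq by (intro sum_mono) auto
    also have "\<dots> = real (card (J \<inter> {..<N})) * q" by simp
    also have "\<dots> \<le> real N * q"
    proof -
      have "card (J \<inter> {..<N}) \<le> card {..<N}" by (intro card_mono) auto
      then show ?thesis using q0 by (intro mult_right_mono) auto
    qed
    finally have nXq: "norm X \<le> real N * q" using nX by simp
    have nYq: "norm Y \<le> q" unfolding q_def using nY S10 by (intro real_le_rsqrt) simp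
    have "norm x \<le> (real N + 1) * q" unfolding xXY using norm_triangle_ineq[of X Y] nXq nYq
      by (simp add: algebra_simps)
    then have "(norm x)^2 \<le> ((real N + 1) * q)^2" by (intro power_mono) auto
    also have "\<dots> = (real N + 1)^2 * (S1 + S2)" using S10 unfolding q_def by (simp add: power_mult_distrib)
    finally have upper: "(norm x)^2 \<le> (real N + 1)^2 * (S1 + S2)" .
    have PY: "oproj EE Y = 0"
    proof -
      have "oproj EE Y = (\<Sum>k<N. cinner Y (v k) *\<^sub>C v k)" by (rule onb_oproj[OF onb])
      also have "\<dots> = 0" unfolding Y_def using onb_coef0[OF onb] by (intro sum.neutral) auto
      finally show ?thesis .
    qed
    have PX: "oproj EE X = (\<Sum>j<N. a' j *\<^sub>C sv j)"
    proof -
      have "oproj EE X = (\<Sum>j\<in>J \<inter> {..<N}. a j *\<^sub>C sv j)"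
        unfolding X_def oproj_sum oproj_scale ..
      also have "\<dots> = (\<Sum>j<N. a' j *\<^sub>C sv j)"
        unfolding restrict_N a'_def by (intro sum.cong) auto
      finally show ?thesis .
    qed
    define c where "c j = (\<Sum>k<N. cinner x (v k) * d k j)" for j
    have Px: "oproj EE x = (\<Sum>j<N. c j *\<^sub>C sv j)"
    proof -
      have "oproj EE x = (\<Sum>k<N. cinner x (v k) *\<^sub>C v k)" by (rule onb_oproj[OF onb])
      also have "\<dots> = (\<Sum>k<N. cinner x (v k) *\<^sub>C (\<Sum>j<N. d k j *\<^sub>C sv j))"
        using d by (intro sum.cong) auto
      also have "\<dots> = (\<Sum>k<N. \<Sum>j<N. (cinner x (v k) * d k j) *\<^sub>C sv j)"
        by (simp add: cvs.scale_sum_right scaleC_scaleC)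
      also have "\<dots> = (\<Sum>j<N. \<Sum>k<N. (cinner x (v k) * d k j) *\<^sub>C sv j)" by (rule sum.swap)
      also have "\<dots> = (\<Sum>j<N. c j *\<^sub>C sv j)" unfolding c_def by (simp add: cvs.scale_sum_left)
      finally show ?thesis .
    qed
    have "(\<Sum>j<N. a' j *\<^sub>C sv j) = (\<Sum>j<N. c j *\<^sub>C sv j)"
      using PX Px PY unfolding xXY oproj_add by simp
    then have a'c: "a' j = c j" if "j < N" for j using indep_unique[OF ii[THEN conjunct1] ii[THEN conjunct2] _ that] by blast
    have cb: "cmod (c j) \<le> D * norm x" if "j < N" for j
    proof -
      have "cmod (c j) \<le> (\<Sum>k<N. cmod (cinner x (v k) * d k j))" unfolding c_def by (rule norm_sum)
      also have "\<dots> \<le> (\<Sum>k<N. norm x * cmod (d k j))"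
      proof (intro sum_mono)
        fix k
        have "cmod (cinner x (v k)) \<le> norm x" using cauchy_schwarz[of x "v k"] vnorm[of k] by simp
        then show "cmod (cinner x (v k) * d k j) \<le> norm x * cmod (d k j)"
          by (simp add: norm_mult mult_right_mono)
      qed
      also have "\<dots> = norm x * (\<Sum>k<N. cmod (d k j))" by (simp add: sum_distrib_left)
      also have "\<dots> \<le> norm x * D" using dD[OF that] by (intro mult_left_mono) auto
      finally show ?thesis by (simp add: mult.commute)
    qed
    have "S1 \<le> (\<Sum>j<N. (D * norm x)^2)" unfolding a'sum2 using cb a'c by (intro sum_mono power_mono) auto
    then have S1b: "S1 \<le> real N * D^2 * (norm x)^2" by (simp add: power_mult_distrib)
    have "(\<Sum>j<N. cmod (a' j)) \<le> (\<Sum>j<N. D * norm x)"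
    proof (rule sum_mono)
      fix j assume "j \<in> {..<N}"
      then show "cmod (a' j) \<le> D * norm x" using cb a'c by simp
    qed
    then have "norm X \<le> (\<Sum>j<N. D * norm x)" using nX unfolding a'sum by linarith
    then have nXb: "norm X \<le> real N * D * norm x" by simp
    have "norm Y \<le> norm x + norm X" unfolding xXY using norm_triangle_ineq4[of "X + Y" X] by simp
    also have "\<dots> \<le> (1 + real N * D) * norm x" using nXb by (simp add: algebra_simps)
    finally have "(norm Y)^2 \<le> ((1 + real N * D) * norm x)^2" by (intro power_mono) auto
    then have S2b: "S2 \<le> (1 + real N * D)^2 * (norm x)^2" unfolding nY by (simp add: power_mult_distrib)
    have lower: "S1 + S2 \<le> K * (norm x)^2" using S1b S2b unfolding K_def by (simp add: algebra_simps)
    show ?thesis using upper lower S unfolding x_def by simp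
  qed
  have A0: "0 < 1 / K" using K1 by simp
  have AB: "1 / K \<le> (real N + 1)^2"
  proof -
    have "1 / K \<le> 1" using K1 by simp
    moreover have "1 \<le> (real N + 1)^2" by simp
    ultimately show ?thesis by linarith
  qed
  have C: "finite J \<longrightarrow>
        1 / K * (\<Sum>j\<in>J. (cmod (a j))\<^sup>2) \<le> (norm (\<Sum>j\<in>J. a j *\<^sub>C BB j))\<^sup>2 \<and>
        (norm (\<Sum>j\<in>J. a j *\<^sub>C BB j))\<^sup>2 \<le> (real N + 1)^2 * (\<Sum>j\<in>J. (cmod (a j))\<^sup>2)" for J a
  proof
    assume J: "finite J"
    show "1 / K * (\<Sum>j\<in>J. (cmod (a j))\<^sup>2) \<le> (norm (\<Sum>j\<in>J. a j *\<^sub>C BB j))\<^sup>2 \<and>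
        (norm (\<Sum>j\<in>J. a j *\<^sub>C BB j))\<^sup>2 \<le> (real N + 1)^2 * (\<Sum>j\<in>J. (cmod (a j))\<^sup>2)"
    proof
      show "1 / K * (\<Sum>j\<in>J. (cmod (a j))\<^sup>2) \<le> (norm (\<Sum>j\<in>J. a j *\<^sub>C BB j))\<^sup>2"
        using main[OF J, of a, THEN conjunct1] K1 by (simp add: field_simps)
      show "(norm (\<Sum>j\<in>J. a j *\<^sub>C BB j))\<^sup>2 \<le> (real N + 1)^2 * (\<Sum>j\<in>J. (cmod (a j))\<^sup>2)"
        using main[OF J, of a, THEN conjunct2] .
    qed
  qed
  show ?thesis unfolding is_riesz_sequence_def
    apply (rule exI[of _ "1/K"], rule exI[of _ "(real N + 1)^2"])
    apply (rule conjI[OF A0], rule conjI[OF AB], rule allI, rule allI, rule C)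
    done
qed

end



context setting begin

lemma dep_coeffs:
  assumes "\<not> (inj_on (\<lambda>j. sv j) {..<N} \<and> cindependent (sv ` {..<N}))"
  obtains a j0 where "j0 < N" "a j0 \<noteq> 0" "(\<Sum>j<N. a j *\<^sub>C sv j) = 0"
proof (cases "inj_on (\<lambda>j. sv j) {..<N}")
  case False
  then obtain i j where ij: "i < N" "j < N" "i \<noteq> j" "sv i = sv j" unfolding inj_on_def by auto
  define a where "a l = (if l = i then 1 else 0) - (if l = j then 1 else (0::complex))" for l
  have "a l *\<^sub>C sv l = (if l = i then sv l else 0) - (if l = j then sv l else 0)" for l
    unfolding a_def by (simp add: cvs.scale_left_diff_distrib)
  then have "(\<Sum>l<N. a l *\<^sub>C sv l) = (\<Sum>l<N. (if l = i then sv l else 0)) - (\<Sum>l<N. (if l = j then sv l else 0))"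
    by (simp add: sum_subtractf)
  also have "\<dots> = 0" using ij by simp
  finally have "(\<Sum>l<N. a l *\<^sub>C sv l) = 0" .
  moreover have "a i \<noteq> 0" using ij unfolding a_def by simp
  ultimately show ?thesis using that ij(1) by blast
next
  case True
  then have dep: "cvs.dependent (sv ` {..<N})" using assms by blast
  have fin: "finite (sv ` {..<N})" by simp
  obtain u y0 where u: "y0 \<in> sv ` {..<N}" "u y0 \<noteq> 0" "(\<Sum>y\<in>sv ` {..<N}. u y *\<^sub>C y) = 0"
    using dep unfolding cvs.dependent_finite[OF fin] by blast
  obtain j0 where j0: "j0 < N" "y0 = sv j0" using u(1) by auto
  have "(\<Sum>j<N. u (sv j) *\<^sub>C sv j) = (\<Sum>y\<in>sv ` {..<N}. u y *\<^sub>C y)"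
    using sum.reindex[OF True, of "\<lambda>y. u y *\<^sub>C y"] by simp
  then have "(\<Sum>j<N. u (sv j) *\<^sub>C sv j) = 0" using u(3) by simp
  then show ?thesis using that[of j0 "\<lambda>j. u (sv j)"] j0 u(2) by blast
qed

lemma noind_noriesz:
  assumes "\<not> (inj_on (\<lambda>j. sv j) {..<N} \<and> cindependent (sv ` {..<N}))"
  shows "\<not> is_riesz_sequence BB"
proof
  assume "is_riesz_sequence BB"
  then obtain A where A: "A > 0" "\<And>J a. finite J \<Longrightarrow> A * (\<Sum>j\<in>J. (cmod (a j))\<^sup>2) \<le> (norm (\<Sum>j\<in>J. a j *\<^sub>C BB j))\<^sup>2"
    unfolding is_riesz_sequence_def by blast
  obtain a j0 where a: "j0 < N" "a j0 \<noteq> 0" "(\<Sum>j<N. a j *\<^sub>C sv j) = 0"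
    using dep_coeffs[OF assms] by blast
  define X where "X = (\<Sum>j<N. a j *\<^sub>C w j)"
  have PX: "oproj EE X = 0" unfolding X_def oproj_sum oproj_scale using a(3) .
  define s0 where "s0 = (\<Sum>j<N. (cmod (a j))\<^sup>2)"
  have "(cmod (a j0))^2 \<le> s0" unfolding s0_def using a(1) by (intro member_le_sum) auto
  moreover have "(cmod (a j0))^2 > 0" using a(2) by simp
  ultimately have s0: "s0 > 0" by linarith
  have eps: "sqrt (A * s0) > 0" using A(1) s0 by simp
  have "X \<in> closure (cspan (range v))" using onb unfolding orthonormal_basis_def by simp
  then obtain y where y: "y \<in> cspan (range v)" "dist y X < sqrt (A * s0)"
    using eps closure_approachable[of X "cspan (range v)"] by blast
  obtain M where M: "y \<in> cspan (v ` {..<M})" using span_range_union[OF y(1)] by blast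
  define M' where "M' = max M N"
  have NM: "N \<le> M'" unfolding M'_def by simp
  have "cspan (v ` {..<M}) \<subseteq> cspan (v ` {..<M'})" unfolding M'_def
    by (intro cvs.span_mono image_mono) (auto simp: less_max_iff_disj)
  then have yM: "y \<in> cspan (v ` {..<M'})" using M by (rule subsetD)
  obtain c where c: "y = (\<Sum>k\<in>{..<M'}. c k *\<^sub>C v k)" using span_rep[OF yM] by blast
  have Py: "oproj EE y = (\<Sum>k<N. c k *\<^sub>C v k)"
  proof -
    have "oproj EE y = (\<Sum>k<N. cinner y (v k) *\<^sub>C v k)" by (rule onb_oproj[OF onb])
    also have "\<dots> = (\<Sum>k<N. c k *\<^sub>C v k)"
      unfolding c using onb_coef[OF onb, of "{..<M'}"] NM by (intro sum.cong) auto
    finally show ?thesis .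
  qed
  have int: "{..<M'} \<inter> {..<N} = {..<N}" using NM by auto
  define z where "z = (\<Sum>k\<in>{..<M'} - {..<N}. c k *\<^sub>C v k)"
  have "y = (\<Sum>k<N. c k *\<^sub>C v k) + z" unfolding z_def c
    using split_J[of "{..<M'}" "\<lambda>k. c k *\<^sub>C v k"] unfolding int by simp
  then have yz: "y = oproj EE y + z" unfolding Py .
  have eqz: "X - z = (X - y) - oproj EE (X - y)" using yz PX by (simp add: oproj_diff algebra_simps)
  have "norm (X - z) \<le> norm (X - y)" unfolding eqz by (rule oproj_le(1)[OF finE orthE])
  also have "\<dots> < sqrt (A * s0)" using y(2) by (simp add: dist_norm norm_minus_commute)
  finally have "(norm (X - z))^2 < (sqrt (A * s0))^2" by (intro power_strict_mono) auto
  then have lt: "(norm (X - z))^2 < A * s0" using A(1) s0 by simp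
  define b where "b k = (if k < N then a k else - c k)" for k
  have "(\<Sum>k\<in>{..<M'}. b k *\<^sub>C BB k) = (\<Sum>k\<in>{..<N}. b k *\<^sub>C BB k) + (\<Sum>k\<in>{..<M'} - {..<N}. b k *\<^sub>C BB k)"
    using split_J[of "{..<M'}" "\<lambda>k. b k *\<^sub>C BB k"] unfolding int by simp
  also have "(\<Sum>k\<in>{..<N}. b k *\<^sub>C BB k) = X" unfolding X_def b_def by (intro sum.cong) auto
  also have "(\<Sum>k\<in>{..<M'} - {..<N}. b k *\<^sub>C BB k) = - z"
    unfolding z_def b_def by (simp add: sum_negf[symmetric] cvs.scale_minus_left)
  finally have bs: "(\<Sum>k\<in>{..<M'}. b k *\<^sub>C BB k) = X - z" by simp
  have "s0 = (\<Sum>k<N. (cmod (b k))\<^sup>2)" unfolding s0_def b_def by (intro sum.cong) auto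
  also have "\<dots> \<le> (\<Sum>k<M'. (cmod (b k))\<^sup>2)" using NM by (intro sum_mono2) auto
  finally have "A * s0 \<le> A * (\<Sum>k<M'. (cmod (b k))\<^sup>2)" using A(1) by simp
  also have "\<dots> \<le> (norm (X - z))^2" using A(2)[of "{..<M'}" b] bs by simp
  finally show False using lt by simp
qed

end



theorem mainTheorem1:
  fixes v w :: "nat \<Rightarrow> 'a::complex_hilbert" and N :: nat
  assumes sep: "separable_space (euclidean :: 'a topology)"
    and onb: "orthonormal_basis v"
    and unit: "\<And>j. norm (w j) = 1"
    and N: "N \<ge> 1"
  defines "B \<equiv> (\<lambda>j. if j < N then w j else v j)"
    and "H' \<equiv> cspan (v ` {..<N})"
  defines "p \<equiv> orth_proj H'"
  shows "(is_frame B \<longleftrightarrow> cspan ((\<lambda>j. p (w j)) ` {..<N}) = H') \<and>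
         (is_frame B \<longleftrightarrow> inj_on (\<lambda>j. p (w j)) {..<N} \<and> cindependent ((\<lambda>j. p (w j)) ` {..<N})) \<and>
         (is_frame B \<longleftrightarrow> is_riesz_sequence B) \<and>
         (is_frame B \<longleftrightarrow> is_riesz_basis B)"
proof -
  interpret setting v w N using onb unit N by unfold_locales
  have p: "p = oproj (v ` {..<N})" unfolding p_def H'_def using orth_proj_eq[OF finE orthE] by (intro ext)
  have sub: "(\<lambda>j. oproj (v ` {..<N}) (w j)) ` {..<N} \<subseteq> cspan (v ` {..<N})" using sE by blast
  have LA: "cspan ((\<lambda>j. p (w j)) ` {..<N}) = H' \<longleftrightarrow> inj_on (\<lambda>j. p (w j)) {..<N} \<and> cindependent ((\<lambda>j. p (w j)) ` {..<N})"
    unfolding p H'_def by (rule lin_alg[OF finE indE cardE N sub])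
  have F: "is_frame B \<longleftrightarrow> cspan ((\<lambda>j. p (w j)) ` {..<N}) = H'"
    unfolding B_def p H'_def
  proof
    assume "is_frame (\<lambda>j. if j < N then w j else v j)"
    then show "cspan ((\<lambda>j. oproj (v ` {..<N}) (w j)) ` {..<N}) = cspan (v ` {..<N})"
      using nospan_noframe by metis
  next
    assume "cspan ((\<lambda>j. oproj (v ` {..<N}) (w j)) ` {..<N}) = cspan (v ` {..<N})"
    then show "is_frame (\<lambda>j. if j < N then w j else v j)" by (rule span_frame)
  qed
  have R: "is_riesz_sequence B \<longleftrightarrow> inj_on (\<lambda>j. p (w j)) {..<N} \<and> cindependent ((\<lambda>j. p (w j)) ` {..<N})"
  proof
    assume "is_riesz_sequence B"
    then show "inj_on (\<lambda>j. p (w j)) {..<N} \<and> cindependent ((\<lambda>j. p (w j)) ` {..<N})"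
      unfolding B_def p using noind_noriesz by metis
  next
    assume "inj_on (\<lambda>j. p (w j)) {..<N} \<and> cindependent ((\<lambda>j. p (w j)) ` {..<N})"
    then have "cspan ((\<lambda>j. oproj (v ` {..<N}) (w j)) ` {..<N}) = cspan (v ` {..<N})"
      using LA unfolding p H'_def by (rule iffD2[rotated])
    then show "is_riesz_sequence B" unfolding B_def by (rule span_riesz)
  qed
  show ?thesis using F LA R unfolding is_riesz_basis_def by blast
qed



end
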